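(* In the Mahi-Mahi protocol, if a leader slot $s$ is committed at two honest validators, then $s$ is committed with the same block at both validators.
   Context: Setting: $n=3f+1$ validators, at most $f$ Byzantine; honest validators create exactly one block per round, Byzantine ones may create several blocks per round (equivocation). Each valid block of round $r$ references (parents) at least $2f+1$ blocks of round $r-1$. A block $b$ of round $r'$ is a vote for a block $L$ of round $r<r'$ with author $a$ if the first block with author $a$ and round $r$ met in the deterministic depth-first search from $b$ along parent references is $L$. With wave length $w\in\{4,5\}$, a block of round $r+w-1$ is a certificate for a block $L$ of round $r$ if at least $2f+1$ of its parents are votes for $L$. A leader slot is a pair (validator, round) chosen via a global perfect common coin (so all validators agree on the sequence of slots); it may contain zero, one or several blocks of that validator and round. Each validator classifies slots from its local DAG: direct commit of $L$ if $2f+1$ round-$(r+w-1)$ certificates for $L$, direct skip if $2f+1$ round-$(r+w-2)$ non-votes for $L$; otherwise via the anchor (first non-skipped slot of round $>r+w-1$): if committed with $A$, commit $L$ if $A$ has a path to a certificate for $L$, else skip; otherwise undecided. Thus a committed block always has a certificate in the validator's DAG. *)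

theory Defs
  imports Main
begin

text \<open>Blocks are identified by their content (as with hashes): author, round,
  the ordered list of parent references, and an arbitrary payload (the payload lets a
  Byzantine author create several distinct blocks with the same author and round).\<close>

datatype ('v, 'p) block =
  Block (author: 'v) (rnd: nat) (parents: "('v, 'p) block list") (payload: 'p)

fun dfs :: "('v, 'p) block \<Rightarrow> ('v, 'p) block list" where
  "dfs (Block a r ps x) = Block a r ps x # concat (map dfs ps)"

definition parent_rel :: "(('v, 'p) block \<times> ('v, 'p) block) set" where
  "parent_rel = {(x, y). y \<in> set (parents x)}"

definition valid_block :: "nat \<Rightarrow> ('v, 'p) block \<Rightarrow> bool" where
  "valid_block f b \<longleftrightarrow>
     (\<forall>p \<in> set (parents b). rnd p < rnd b) \<and>
     (0 < rnd b \<longrightarrow> 2 * f + 1 \<le> card (author ` {p \<in> set (parents b). rnd p = rnd b - 1}))"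

definition is_vote :: "('v, 'p) block \<Rightarrow> ('v, 'p) block \<Rightarrow> bool" where
  "is_vote b L \<longleftrightarrow> rnd L < rnd b \<and>
     find (\<lambda>x. author x = author L \<and> rnd x = rnd L) (dfs b) = Some L"

definition is_cert :: "nat \<Rightarrow> nat \<Rightarrow> ('v, 'p) block \<Rightarrow> ('v, 'p) block \<Rightarrow> bool" where
  "is_cert f w c L \<longleftrightarrow> rnd c = rnd L + w - 1 \<and>
     2 * f + 1 \<le> card (author ` {p \<in> set (parents c). rnd p = rnd c - 1 \<and> is_vote p L})"

definition direct_commit ::
  "nat \<Rightarrow> nat \<Rightarrow> ('v, 'p) block set \<Rightarrow> 'v \<times> nat \<Rightarrow> ('v, 'p) block \<Rightarrow> bool" where
  "direct_commit f w D s L \<longleftrightarrow> L \<in> D \<and> author L = fst s \<and> rnd L = snd s \<and>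
     2 * f + 1 \<le> card (author ` {c \<in> D. is_cert f w c L})"

definition direct_skip :: "nat \<Rightarrow> nat \<Rightarrow> ('v, 'p) block set \<Rightarrow> 'v \<times> nat \<Rightarrow> bool" where
  "direct_skip f w D s \<longleftrightarrow>
     2 * f + 1 \<le> card (author ` {b \<in> D. rnd b = snd s + w - 2 \<and>
        \<not> (\<exists>L. author L = fst s \<and> rnd L = snd s \<and> is_vote b L)})"

text \<open>Decision rule of a validator with local DAG D for the slot sequence slot
  (slot i is the i-th leader slot). committed ... i L: slot i is committed with block L;
  skipped ... i: slot i is skipped; neither: undecided.\<close>

inductive committed ::
  "nat \<Rightarrow> nat \<Rightarrow> (nat \<Rightarrow> 'v \<times> nat) \<Rightarrow> ('v, 'p) block set \<Rightarrow> nat \<Rightarrow> ('v, 'p) block \<Rightarrow> bool"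
  and skipped ::
  "nat \<Rightarrow> nat \<Rightarrow> (nat \<Rightarrow> 'v \<times> nat) \<Rightarrow> ('v, 'p) block set \<Rightarrow> nat \<Rightarrow> bool"
  for f w slot D
where
  commit_direct:
    "direct_commit f w D (slot i) L \<Longrightarrow> committed f w slot D i L"
| skip_direct:
    "\<not> (\<exists>L. direct_commit f w D (slot i) L) \<Longrightarrow> direct_skip f w D (slot i) \<Longrightarrow>
     skipped f w slot D i"
| commit_indirect:
    "\<not> (\<exists>L. direct_commit f w D (slot i) L) \<Longrightarrow> \<not> direct_skip f w D (slot i) \<Longrightarrow>
     snd (slot i) + w - 1 < snd (slot j) \<Longrightarrow>
     (\<forall>k<j. snd (slot i) + w - 1 < snd (slot k) \<longrightarrow> skipped f w slot D k) \<Longrightarrow>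
     committed f w slot D j A \<Longrightarrow>
     c \<in> D \<Longrightarrow> is_cert f w c L \<Longrightarrow> author L = fst (slot i) \<Longrightarrow> rnd L = snd (slot i) \<Longrightarrow>
     (A, c) \<in> parent_rel\<^sup>* \<Longrightarrow>
     committed f w slot D i L"
| skip_indirect:
    "\<not> (\<exists>L. direct_commit f w D (slot i) L) \<Longrightarrow> \<not> direct_skip f w D (slot i) \<Longrightarrow>
     snd (slot i) + w - 1 < snd (slot j) \<Longrightarrow>
     (\<forall>k<j. snd (slot i) + w - 1 < snd (slot k) \<longrightarrow> skipped f w slot D k) \<Longrightarrow>
     committed f w slot D j A \<Longrightarrow>
     \<not> (\<exists>c L. c \<in> D \<and> is_cert f w c L \<and> author L = fst (slot i) \<and> rnd L = snd (slot i) \<and>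
            (A, c) \<in> parent_rel\<^sup>*) \<Longrightarrow>
     skipped f w slot D i"

end

theory Submission
  imports Defs
begin

lemma committed_cert:
  assumes "committed f w slot D i L"
  shows "author L = fst (slot i) \<and> rnd L = snd (slot i) \<and> (\<exists>c\<in>D. is_cert f w c L)"
  using assms
proof (cases rule: committed.cases)
  case commit_direct
  let ?X = "author ` {c \<in> D. is_cert f w c L}"
  have "2 * f + 1 \<le> card ?X" using commit_direct by (simp add: direct_commit_def)
  then have "0 < card ?X" by linarith
  then have "?X \<noteq> {}" using card_gt_0_iff by blast
  then show ?thesis using commit_direct unfolding direct_commit_def by blast
next
  case (commit_indirect j A c)
  then show ?thesis by blast
qed

lemma card_inter_bound:
  assumes "finite V" "A1 \<subseteq> V" "A2 \<subseteq> V" "card V = 3 * f + 1"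
    "2 * f + 1 \<le> card A1" "2 * f + 1 \<le> card A2"
  shows "f + 1 \<le> card (A1 \<inter> A2)"
proof -
  have f1: "finite A1" "finite A2" using assms finite_subset by auto
  have "card (A1 \<union> A2) \<le> card V" using assms by (intro card_mono) auto
  moreover have "card (A1 \<union> A2) + card (A1 \<inter> A2) = card A1 + card A2"
    using card_Un_Int[OF f1] by simp
  ultimately show ?thesis using assms by linarith
qed

theorem lemma5:
  fixes V Byz :: "'v set" and f w :: nat
    and B :: "('v, 'p) block set" and D :: "'v \<Rightarrow> ('v, 'p) block set"
    and slot :: "nat \<Rightarrow> 'v \<times> nat" and i :: nat and v1 v2 :: 'v
    and L1 L2 :: "('v, 'p) block"
  assumes "finite V" and "card V = 3 * f + 1"
    and "Byz \<subseteq> V" and "card Byz \<le> f"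
    and "w \<in> {4, 5}"
    and "\<forall>b \<in> B. author b \<in> V"
    and "\<forall>b1 \<in> B. \<forall>b2 \<in> B. author b1 = author b2 \<and> author b1 \<notin> Byz \<and> rnd b1 = rnd b2
           \<longrightarrow> b1 = b2"
    and "\<forall>v \<in> V - Byz. finite (D v) \<and> D v \<subseteq> B \<and>
           (\<forall>b \<in> D v. valid_block f b \<and> set (parents b) \<subseteq> D v)"
    and "\<forall>k. fst (slot k) \<in> V"
    and "v1 \<in> V - Byz" and "v2 \<in> V - Byz"
    and "committed f w slot (D v1) i L1"
    and "committed f w slot (D v2) i L2"
  shows "L1 = L2"
proof -
  obtain c1 where c1: "c1 \<in> D v1" "is_cert f w c1 L1" and a1: "author L1 = fst (slot i)" "rnd L1 = snd (slot i)"
    using committed_cert[OF assms(12)] by blast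
  obtain c2 where c2: "c2 \<in> D v2" "is_cert f w c2 L2" and a2: "author L2 = fst (slot i)" "rnd L2 = snd (slot i)"
    using committed_cert[OF assms(13)] by blast
  define P1 where "P1 = {p \<in> set (parents c1). rnd p = rnd c1 - 1 \<and> is_vote p L1}"
  define P2 where "P2 = {p \<in> set (parents c2). rnd p = rnd c2 - 1 \<and> is_vote p L2}"
  have D1: "D v1 \<subseteq> B" "set (parents c1) \<subseteq> D v1" using assms(8,10) c1 by auto
  have D2: "D v2 \<subseteq> B" "set (parents c2) \<subseteq> D v2" using assms(8,11) c2 by auto
  have P1B: "P1 \<subseteq> B" using D1 P1_def by auto
  have P2B: "P2 \<subseteq> B" using D2 P2_def by auto
  have s1: "author ` P1 \<subseteq> V" using P1B assms(6) by auto
  have s2: "author ` P2 \<subseteq> V" using P2B assms(6) by auto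
  have k1: "2 * f + 1 \<le> card (author ` P1)" using c1 unfolding is_cert_def P1_def by blast
  have k2: "2 * f + 1 \<le> card (author ` P2)" using c2 unfolding is_cert_def P2_def by blast
  have "f + 1 \<le> card (author ` P1 \<inter> author ` P2)"
    using card_inter_bound[OF assms(1) s1 s2 assms(2) k1 k2] .
  moreover have "finite Byz" using assms(1,3) finite_subset by auto
  ultimately have "\<not> (author ` P1 \<inter> author ` P2 \<subseteq> Byz)"
  proof (intro notI)
    assume fb: "finite Byz" and ge: "f + 1 \<le> card (author ` P1 \<inter> author ` P2)"
      and sub: "author ` P1 \<inter> author ` P2 \<subseteq> Byz"
    have "card (author ` P1 \<inter> author ` P2) \<le> card Byz" using card_mono[OF fb sub] .
    then show False using ge assms(4) by linarith
  qed
  then obtain p1 p2 where p: "p1 \<in> P1" "p2 \<in> P2" "author p1 = author p2" "author p1 \<notin> Byz"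
    by blast
  have "rnd c1 = rnd c2" using c1 c2 a1 a2 unfolding is_cert_def by simp
  then have "rnd p1 = rnd p2" using p unfolding P1_def P2_def by simp
  then have "p1 = p2" using p P1B P2B assms(7) by blast
  moreover have "is_vote p1 L1" "is_vote p2 L2" using p unfolding P1_def P2_def by auto
  ultimately show ?thesis using a1 a2 unfolding is_vote_def by (metis option.inject)
qed

end
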